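(* For a Legendrian curve $\gamma$, \begin{equation} \lim_{\Delta s,\,\Delta t\to 0} \frac{\mathbb{X}(\gamma(s),\gamma(t),\gamma(s+\Delta s),\gamma(t+\Delta t))}{(\Delta s)^2(\Delta t)^2} =\left(\frac{|\gamma'(s)|\,|\gamma'(t)|}{\|\gamma(s)^{-1}\gamma(t)\|_{\mathcal{H}}^2}\right)^2 \end{equation} holds for $s\neq t$.
   Context: $\mathcal{H}=\mathbb{C}\times\mathbb{R}$ is the 3-dimensional Heisenberg group with coordinates $(z,u)=(x,y,u)$, group law $(z,u)\cdot(z',u')=(z+z',u+u'-\tfrac{1}{2}\Im(z\overline{z'}))$, horizontal distribution spanned by $X=\partial_x-\tfrac12 y\,\partial_u$, $Y=\partial_y+\tfrac12 x\,\partial_u$ (orthonormal, norm $|\cdot|$); a curve is Legendrian if its velocity is horizontal. The Korányi norm is $\|(x,y,u)\|_{\mathcal{H}}=\sqrt[4]{(x^2+y^2)^2+16u^2}$. For $p=(z,u)$ set $A(p)=|z|^2-4iu$, so $\|p\|_{\mathcal{H}}=|A(p)|^{1/2}$. The complex cross ratio (Korányi–Reimann) is $\mathbb{X}(p_1,p_2,p_3,p_4)=\dfrac{A(p_3^{-1}p_1)A(p_4^{-1}p_2)}{A(p_4^{-1}p_1)A(p_3^{-1}p_2)}$. *)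

theory Defs
  imports "HOL-Analysis.Analysis"
begin

type_synonym heis = "complex \<times> real"

definition heis_mult :: "heis \<Rightarrow> heis \<Rightarrow> heis" where
  "heis_mult p q = (fst p + fst q, snd p + snd q - (1/2) * Im (fst p * cnj (fst q)))"

definition heis_inv :: "heis \<Rightarrow> heis" where
  "heis_inv p = (- fst p, - snd p)"

definition koranyi :: "heis \<Rightarrow> real" where
  "koranyi p = root 4 (((Re (fst p))\<^sup>2 + (Im (fst p))\<^sup>2)\<^sup>2 + 16 * (snd p)\<^sup>2)"

definition heisA :: "heis \<Rightarrow> complex" where
  "heisA p = complex_of_real ((cmod (fst p))\<^sup>2) - 4 * \<i> * complex_of_real (snd p)"

definition cross_ratio :: "heis \<Rightarrow> heis \<Rightarrow> heis \<Rightarrow> heis \<Rightarrow> complex" where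
  "cross_ratio p1 p2 p3 p4 =
     (heisA (heis_mult (heis_inv p3) p1) * heisA (heis_mult (heis_inv p4) p2)) /
     (heisA (heis_mult (heis_inv p4) p1) * heisA (heis_mult (heis_inv p3) p2))"

text \<open>A tangent vector v = (z', u') at p = (z,u) is horizontal iff it lies in span{X,Y},
  i.e. v = a X + b Y with z' = a + i b, which means u' = (x y' - y x')/2 = Im(cnj z * z')/2.\<close>
definition horizontal :: "heis \<Rightarrow> heis \<Rightarrow> bool" where
  "horizontal p v \<longleftrightarrow> snd v = (1/2) * Im (cnj (fst p) * fst v)"

text \<open>Sub-Riemannian length |v| of a horizontal vector (X, Y orthonormal).\<close>
definition hnorm :: "heis \<Rightarrow> real" where
  "hnorm v = cmod (fst v)"

definition legendrian_C1 :: "real set \<Rightarrow> (real \<Rightarrow> heis) \<Rightarrow> (real \<Rightarrow> heis) \<Rightarrow> bool" where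
  "legendrian_C1 I g g' \<longleftrightarrow> open I \<and>
     (\<forall>\<tau>\<in>I. (g has_vector_derivative g' \<tau>) (at \<tau>)) \<and>
     continuous_on I g' \<and>
     (\<forall>\<tau>\<in>I. horizontal (g \<tau>) (g' \<tau>))"

end

theory Submission imports Defs begin
lemma dq2:
  fixes f :: "real \<Rightarrow> 'a::real_normed_vector"
  assumes "(f has_vector_derivative D) (at x)"
  shows "((\<lambda>h. (f (x+h) - f x) /\<^sub>R h) \<longlongrightarrow> D) (at 0)"
proof -
  have lim: "((\<lambda>h. norm (f (x + h) - f x - h *\<^sub>R D) / norm h) \<longlongrightarrow> 0) (at 0)"
    using assms unfolding has_vector_derivative_def has_derivative_at by blast
  have ev: "\<forall>\<^sub>F h in at 0. norm (f (x + h) - f x - h *\<^sub>R D) / norm h = norm ((f (x+h) - f x) /\<^sub>R h - D)"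
    unfolding eventually_at_filter
  proof (intro always_eventually allI impI)
    fix h :: real assume h: "h \<noteq> 0"
    have e: "(f (x+h) - f x) /\<^sub>R h - D = (inverse h) *\<^sub>R (f (x + h) - f x - h *\<^sub>R D)"
      using h by (simp only: scaleR_diff_right scaleR_scaleR left_inverse[OF h] scaleR_one)
    show "norm (f (x + h) - f x - h *\<^sub>R D) / norm h = norm ((f (x+h) - f x) /\<^sub>R h - D)"
      unfolding e norm_scaleR real_norm_def abs_inverse divide_inverse by (rule mult.commute)
  qed
  have "((\<lambda>h. norm ((f (x+h) - f x) /\<^sub>R h - D)) \<longlongrightarrow> 0) (at 0)"
    by (rule tendsto_cong[OF ev, THEN iffD1, OF lim])
  then have "((\<lambda>h. (f (x+h) - f x) /\<^sub>R h - D) \<longlongrightarrow> 0) (at 0)"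
    by (rule tendsto_norm_zero_iff[THEN iffD1])
  from tendsto_add[OF this tendsto_const[of D]] show ?thesis by simp
qed

lemma mvt_abs:
  fixes f f' :: "real \<Rightarrow> real"
  assumes "\<And>x. \<bar>x\<bar> \<le> \<bar>h\<bar> \<Longrightarrow> DERIV f x :> f' x"
    and "\<And>x. \<bar>x\<bar> \<le> \<bar>h\<bar> \<Longrightarrow> \<bar>f' x\<bar> \<le> B"
  shows "\<bar>f h - f 0\<bar> \<le> B * \<bar>h\<bar>"
proof (cases "h = 0")
  case True then show ?thesis by simp
next
  case False
  show ?thesis
  proof (cases "h > 0")
    case True
    have "\<exists>z. 0 < z \<and> z < h \<and> f h - f 0 = (h - 0) * f' z"
    proof (rule MVT2)
      fix x :: real assume "0 \<le> x" "x \<le> h"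
      then show "DERIV f x :> f' x" using assms(1) by simp
    qed fact
    then obtain z where z: "0 < z" "z < h" "f h - f 0 = (h - 0) * f' z" by blast
    have B: "\<bar>f' z\<bar> \<le> B" using assms(2)[of z] z by simp
    have "\<bar>f h - f 0\<bar> = h * \<bar>f' z\<bar>" using z(3) True by (simp add: abs_mult)
    also have "\<dots> \<le> h * B" using B True by (simp add: mult_left_mono)
    also have "\<dots> = B * \<bar>h\<bar>" using True by simp
    finally show ?thesis .
  next
    case False
    then have hn: "h < 0" using \<open>h \<noteq> 0\<close> by simp
    have "\<exists>z. h < z \<and> z < 0 \<and> f 0 - f h = (0 - h) * f' z"
    proof (rule MVT2)
      fix x :: real assume "h \<le> x" "x \<le> 0"
      then show "DERIV f x :> f' x" using assms(1) by simp
    qed fact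
    then obtain z where z: "h < z" "z < 0" "f 0 - f h = (0 - h) * f' z" by blast
    have B: "\<bar>f' z\<bar> \<le> B" using assms(2)[of z] z by simp
    have "\<bar>f 0 - f h\<bar> = (-h) * \<bar>f' z\<bar>" using z(3) hn by (simp add: abs_mult)
    also have "\<dots> \<le> (-h) * B" using B hn by (simp add: mult_left_mono)
    also have "\<dots> = B * \<bar>h\<bar>" using hn by simp
    finally have "\<bar>f 0 - f h\<bar> \<le> B * \<bar>h\<bar>" .
    then show ?thesis by (metis abs_minus_commute)
  qed
qed


lemma key:
  assumes leg: "legendrian_C1 I g g'" and sI: "s \<in> I"
  shows "((\<lambda>h. heisA (heis_mult (heis_inv (g (s+h))) (g s)) / complex_of_real (h\<^sup>2))
           \<longlongrightarrow> complex_of_real ((hnorm (g' s))\<^sup>2)) (at 0)"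
proof -
  define Z where "Z = (\<lambda>\<tau>. fst (g \<tau>))"
  define U where "U = (\<lambda>\<tau>. snd (g \<tau>))"
  define Z' where "Z' = (\<lambda>\<tau>. fst (g' \<tau>))"
  define U' where "U' = (\<lambda>\<tau>. snd (g' \<tau>))"
  from leg have oI: "open I" and der: "\<And>\<tau>. \<tau>\<in>I \<Longrightarrow> (g has_vector_derivative g' \<tau>) (at \<tau>)"
    and cont: "continuous_on I g'" and hor: "\<And>\<tau>. \<tau>\<in>I \<Longrightarrow> horizontal (g \<tau>) (g' \<tau>)"
    unfolding legendrian_C1_def by auto
  have derZ: "(Z has_vector_derivative Z' \<tau>) (at \<tau>)" if "\<tau> \<in> I" for \<tau>
    using has_derivative_fst[OF der[OF that, unfolded has_vector_derivative_def]]
    unfolding Z_def Z'_def has_vector_derivative_def by simp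
  have derU: "(U has_vector_derivative U' \<tau>) (at \<tau>)" if "\<tau> \<in> I" for \<tau>
    using has_derivative_snd[OF der[OF that, unfolded has_vector_derivative_def]]
    unfolding U_def U'_def has_vector_derivative_def by simp
  have horU: "U' \<tau> = 1/2 * Im (cnj (Z \<tau>) * Z' \<tau>)" if "\<tau> \<in> I" for \<tau>
    using hor[OF that] unfolding horizontal_def U'_def Z_def Z'_def by simp
  have "isCont g' s" using cont oI sI continuous_on_eq_continuous_at by blast
  then have "isCont Z' s" unfolding Z'_def by (intro continuous_intros)
  then have Z'lim: "((\<lambda>\<tau>. Z' (s + \<tau>)) \<longlongrightarrow> Z' s) (at 0)"
    using LIM_offset_zero isCont_def by blast
  have dqZ: "((\<lambda>h. (Z (s+h) - Z s) /\<^sub>R h) \<longlongrightarrow> Z' s) (at 0)"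
    using dq2[OF derZ[OF sI]] .
  obtain d0 where d0: "d0 > 0" "ball s d0 \<subseteq> I" using oI sI openE by blast
  have inI: "s + \<tau> \<in> I" if "\<bar>\<tau>\<bar> < d0" for \<tau>
    using d0 that by (auto simp: dist_real_def)
  define f where "f = (\<lambda>h. U (s+h) - U s - 1/2 * Im (cnj (Z s) * (Z (s+h) - Z s)))"
  define f' where "f' = (\<lambda>\<tau>. U' (s+\<tau>) - 1/2 * Im (cnj (Z s) * Z' (s+\<tau>)))"
  have derf: "DERIV f \<tau> :> f' \<tau>" if "\<bar>\<tau>\<bar> < d0" for \<tau>
  proof -
    have sh: "((\<lambda>h. s + h) has_vector_derivative 1) (at \<tau>)"
      unfolding has_real_derivative_iff_has_vector_derivative[symmetric]
      by (auto intro!: derivative_eq_intros)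
    have hZ: "((\<lambda>h. Z (s+h)) has_derivative (\<lambda>h. h *\<^sub>R Z' (s+\<tau>))) (at \<tau>)"
      using vector_diff_chain_at[OF sh derZ[OF inI[OF that]]]
      unfolding has_vector_derivative_def o_def by simp
    have hU: "((\<lambda>h. U (s+h)) has_derivative (\<lambda>h. h *\<^sub>R U' (s+\<tau>))) (at \<tau>)"
      using vector_diff_chain_at[OF sh derU[OF inI[OF that]]]
      unfolding has_vector_derivative_def o_def by simp
    show ?thesis unfolding has_field_derivative_def f_def f'_def
      apply (rule has_derivative_eq_rhs)
       apply (rule derivative_intros hZ hU)+
      apply (auto simp: fun_eq_iff algebra_simps scaleR_conv_of_real)
      done
  qed
  have f'0: "f' 0 = 0" using horU[OF sI] unfolding f'_def by simp
  have phi: "((\<lambda>\<tau>. 1/2 * Im (cnj ((Z (s+\<tau>) - Z s) /\<^sub>R \<tau>) * Z' (s+\<tau>))) \<longlongrightarrow>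
              1/2 * Im (cnj (Z' s) * Z' s)) (at 0)"
    by (intro tendsto_intros dqZ Z'lim)
  have "Im (cnj (Z' s) * Z' s) = 0" by simp
  have ev: "\<forall>\<^sub>F \<tau> in at 0. 1/2 * Im (cnj ((Z (s+\<tau>) - Z s) /\<^sub>R \<tau>) * Z' (s+\<tau>)) = f' \<tau> / \<tau>"
  proof -
  have "\<forall>\<tau>. \<tau> \<noteq> 0 \<and> dist \<tau> 0 < d0 \<longrightarrow> 1/2 * Im (cnj ((Z (s+\<tau>) - Z s) /\<^sub>R \<tau>) * Z' (s+\<tau>)) = f' \<tau> / \<tau>"
  proof (intro allI impI)
    fix \<tau> :: real assume a: "\<tau> \<noteq> 0 \<and> dist \<tau> 0 < d0"
    then have "\<bar>\<tau>\<bar> < d0" by simp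
    have e: "f' \<tau> = 1/2 * Im (cnj (Z (s+\<tau>)) * Z' (s+\<tau>)) - 1/2 * Im (cnj (Z s) * Z' (s+\<tau>))"
      unfolding f'_def horU[OF inI[OF \<open>\<bar>\<tau>\<bar> < d0\<close>]] ..
    show "1/2 * Im (cnj ((Z (s+\<tau>) - Z s) /\<^sub>R \<tau>) * Z' (s+\<tau>)) = f' \<tau> / \<tau>"
      unfolding e using a
      by (simp add: scaleR_conv_of_real field_simps algebra_simps)
  qed
  then show ?thesis unfolding eventually_at using d0 by blast
  qed
  have f'lim: "((\<lambda>\<tau>. f' \<tau> / \<tau>) \<longlongrightarrow> 0) (at 0)"
    using tendsto_cong[OF ev] phi \<open>Im (cnj (Z' s) * Z' s) = 0\<close> by simp
  have flim: "((\<lambda>h. f h / h\<^sup>2) \<longlongrightarrow> 0) (at 0)"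
    unfolding LIM_eq
  proof (intro allI impI)
    fix r :: real assume r: "r > 0"
    obtain d1 where d1: "d1 > 0" "\<And>\<tau>. \<tau> \<noteq> 0 \<and> norm (\<tau> - 0) < d1 \<Longrightarrow> norm (f' \<tau> / \<tau> - 0) < r/2"
      using f'lim[unfolded LIM_eq, rule_format, of "r/2"] r by auto
    have bd: "\<bar>f' \<tau>\<bar> \<le> r/2 * \<bar>\<tau>\<bar>" if "\<bar>\<tau>\<bar> < d1" for \<tau>
    proof (cases "\<tau> = 0")
      case True then show ?thesis using f'0 by simp
    next
      case False
      then have "\<bar>f' \<tau> / \<tau>\<bar> < r/2" using d1(2)[of \<tau>] that by simp
      then show ?thesis using False by (simp add: abs_divide field_simps)
    qed
    show "\<exists>d>0. \<forall>h. h \<noteq> 0 \<and> norm (h - 0) < d \<longrightarrow> norm (f h / h\<^sup>2 - 0) < r"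
    proof (intro exI[of _ "min d0 d1"] conjI allI impI)
      show "min d0 d1 > 0" using d0 d1 by simp
      fix h :: real assume h: "h \<noteq> 0 \<and> norm (h - 0) < min d0 d1"
      have "\<bar>f h - f 0\<bar> \<le> (r/2 * \<bar>h\<bar>) * \<bar>h\<bar>"
      proof (rule mvt_abs)
        fix x :: real assume x: "\<bar>x\<bar> \<le> \<bar>h\<bar>"
        show "DERIV f x :> f' x" using derf x h by simp
        have "\<bar>f' x\<bar> \<le> r/2 * \<bar>x\<bar>" using bd x h by simp
        also have "\<dots> \<le> r/2 * \<bar>h\<bar>" using x r by simp
        finally show "\<bar>f' x\<bar> \<le> r/2 * \<bar>h\<bar>" .
      qed
      moreover have "f 0 = 0" unfolding f_def by simp
      ultimately have "\<bar>f h\<bar> \<le> r/2 * h\<^sup>2" by (simp add: power2_eq_square abs_mult_self_eq)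
      then have "\<bar>f h / h\<^sup>2\<bar> \<le> r/2" using h by (simp add: abs_divide field_simps)
      then have "\<bar>f h / h\<^sup>2\<bar> < r" using r by linarith
      then show "norm (f h / h\<^sup>2 - 0) < r" by simp
    qed
  qed
  have ev2: "\<forall>\<^sub>F h in at 0. complex_of_real ((cmod ((Z (s+h) - Z s) /\<^sub>R h))\<^sup>2) + 4 * \<i> * complex_of_real (f h / h\<^sup>2)
      = heisA (heis_mult (heis_inv (g (s+h))) (g s)) / complex_of_real (h\<^sup>2)"
    unfolding eventually_at_filter
  proof (intro always_eventually allI impI)
    fix h :: real assume h: "h \<noteq> 0"
      have nz: "(cmod ((Z (s+h) - Z s) /\<^sub>R h))\<^sup>2 = (cmod (Z s - Z (s+h)))\<^sup>2 / h\<^sup>2"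
        by (simp add: norm_minus_commute power_divide divide_inverse power_mult_distrib power_inverse)
    show "complex_of_real ((cmod ((Z (s+h) - Z s) /\<^sub>R h))\<^sup>2) + 4 * \<i> * complex_of_real (f h / h\<^sup>2)
      = heisA (heis_mult (heis_inv (g (s+h))) (g s)) / complex_of_real (h\<^sup>2)"
      unfolding nz
      using h unfolding f_def heisA_def heis_mult_def heis_inv_def Z_def U_def
      by (simp add: complex_eq_iff power_divide norm_minus_commute field_simps algebra_simps)
  qed
  have "((\<lambda>h. complex_of_real ((cmod ((Z (s+h) - Z s) /\<^sub>R h))\<^sup>2) + 4 * \<i> * complex_of_real (f h / h\<^sup>2))
     \<longlongrightarrow> complex_of_real ((cmod (Z' s))\<^sup>2) + 4 * \<i> * complex_of_real 0) (at 0)"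
    by (intro tendsto_intros dqZ flim)
  then show ?thesis using tendsto_cong[OF ev2] unfolding hnorm_def Z'_def by simp
qed

lemma contA: "isCont (\<lambda>p. heisA (heis_mult (heis_inv p) q)) p0"
  unfolding heisA_def heis_mult_def heis_inv_def by (simp; intro continuous_intros)

lemma Aprod:
  "heisA (heis_mult (heis_inv q) p) * heisA (heis_mult (heis_inv p) q)
     = complex_of_real ((koranyi (heis_mult (heis_inv p) q))^4)"
proof -
  define a where "a = fst (heis_mult (heis_inv p) q)"
  define b where "b = snd (heis_mult (heis_inv p) q)"
  have 1: "heis_mult (heis_inv q) p = (-a, -b)"
    unfolding a_def b_def heis_mult_def heis_inv_def
    by (simp add: prod_eq_iff algebra_simps)
  have 2: "heis_mult (heis_inv p) q = (a, b)" unfolding a_def b_def by simp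
  have k: "(koranyi (a, b))^4 = ((Re a)\<^sup>2 + (Im a)\<^sup>2)\<^sup>2 + 16 * b\<^sup>2"
    unfolding koranyi_def by (subst real_root_pow_pos2) auto
  have "heisA (-a, -b) * heisA (a, b) = complex_of_real (((Re a)\<^sup>2 + (Im a)\<^sup>2)\<^sup>2 + 16 * b\<^sup>2)"
  proof -
    have h1: "heisA (-a,-b) = Complex ((Re a)\<^sup>2+(Im a)\<^sup>2) (4*b)"
      unfolding heisA_def by (simp add: complex_eq_iff cmod_power2)
    have h2: "heisA (a,b) = Complex ((Re a)\<^sup>2+(Im a)\<^sup>2) (-4*b)"
      unfolding heisA_def by (simp add: complex_eq_iff cmod_power2)
    show ?thesis unfolding h1 h2 by (simp add: complex_eq_iff power2_eq_square algebra_simps)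
  qed
  then show ?thesis unfolding 1 2 k .
qed

lemma Anz:
  assumes "p \<noteq> q"
  shows "(koranyi (heis_mult (heis_inv p) q))^4 \<noteq> 0"
proof
  assume "(koranyi (heis_mult (heis_inv p) q))^4 = 0"
  moreover have "(koranyi (heis_mult (heis_inv p) q))^4 = ((Re (fst q - fst p))\<^sup>2 + (Im (fst q - fst p))\<^sup>2)\<^sup>2
      + 16 * (snd q - snd p + 1/2 * Im (fst p * cnj (fst q)))\<^sup>2"
    unfolding koranyi_def heis_mult_def heis_inv_def
    by (subst real_root_pow_pos2) (auto simp: algebra_simps)
  ultimately have "(Re (fst q - fst p))\<^sup>2 + (Im (fst q - fst p))\<^sup>2 = 0"
    and b: "snd q - snd p + 1/2 * Im (fst p * cnj (fst q)) = 0"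
    by (smt (verit) power2_less_eq_zero_iff sum_power2_ge_zero zero_le_power2)+
  then have "fst q = fst p" by (simp add: complex_eq_iff)
  with b have "snd q = snd p" by simp
  with \<open>fst q = fst p\<close> show False using assms by (simp add: prod_eq_iff)
qed

lemma alg: "(A * B) / (C * E) / ((x::complex) * y) = (A / x) * (B / y) / (C * E)"
  by (simp add: divide_inverse inverse_mult_distrib mult_ac)

theorem proposition6p1:
  fixes I :: "real set" and \<gamma> \<gamma>' :: "real \<Rightarrow> complex \<times> real" and s t :: real
  assumes "legendrian_C1 I \<gamma> \<gamma>'"
    and "s \<in> I" and "t \<in> I" and "s \<noteq> t"
    and "\<gamma> s \<noteq> \<gamma> t"
  shows "((\<lambda>(ds, dt). cross_ratio (\<gamma> s) (\<gamma> t) (\<gamma> (s + ds)) (\<gamma> (t + dt))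
              / complex_of_real (ds\<^sup>2 * dt\<^sup>2))
          \<longlongrightarrow> complex_of_real
                ((hnorm (\<gamma>' s) * hnorm (\<gamma>' t) / (koranyi (heis_mult (heis_inv (\<gamma> s)) (\<gamma> t)))\<^sup>2)\<^sup>2))
         (at (0, 0) within {(ds, dt). ds \<noteq> 0 \<and> dt \<noteq> 0})"
proof -
  define S where "S = {(ds::real, dt::real). ds \<noteq> 0 \<and> dt \<noteq> 0}"
  define F where "F = at ((0::real), (0::real)) within S"
  define N1 where "N1 = (\<lambda>h. heisA (heis_mult (heis_inv (\<gamma> (s+h))) (\<gamma> s)) / complex_of_real (h\<^sup>2))"
  define N2 where "N2 = (\<lambda>h. heisA (heis_mult (heis_inv (\<gamma> (t+h))) (\<gamma> t)) / complex_of_real (h\<^sup>2))"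
  define D where "D = (\<lambda>x::real\<times>real. heisA (heis_mult (heis_inv (\<gamma> (t + snd x))) (\<gamma> s))
                       * heisA (heis_mult (heis_inv (\<gamma> (s + fst x))) (\<gamma> t)))"
  have leg: "legendrian_C1 I \<gamma> \<gamma>'" by fact
  from leg have der: "\<And>\<tau>. \<tau>\<in>I \<Longrightarrow> (\<gamma> has_vector_derivative \<gamma>' \<tau>) (at \<tau>)"
    unfolding legendrian_C1_def by auto
  have cs: "isCont \<gamma> s" using der[OF assms(2)] has_vector_derivative_continuous by blast
  have ct: "isCont \<gamma> t" using der[OF assms(3)] has_vector_derivative_continuous by blast
  have id: "((\<lambda>x. x) \<longlongrightarrow> (0::real, 0::real)) F" unfolding F_def by (rule tendsto_ident_at)
  have evS: "\<forall>\<^sub>F x in F. x \<in> S" unfolding F_def eventually_at_filter by simp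
  have ffst: "filterlim fst (at 0) F"
    unfolding filterlim_at
  proof
    show "\<forall>\<^sub>F x in F. fst x \<in> UNIV \<and> fst x \<noteq> 0" using evS by eventually_elim (auto simp: S_def)
    show "(fst \<longlongrightarrow> 0) F" using tendsto_fst[OF id] by simp
  qed
  have fsnd: "filterlim snd (at 0) F"
    unfolding filterlim_at
  proof
    show "\<forall>\<^sub>F x in F. snd x \<in> UNIV \<and> snd x \<noteq> 0" using evS by eventually_elim (auto simp: S_def)
    show "(snd \<longlongrightarrow> 0) F" using tendsto_snd[OF id] by simp
  qed
  have L1: "((\<lambda>x. N1 (fst x)) \<longlongrightarrow> complex_of_real ((hnorm (\<gamma>' s))\<^sup>2)) F"
    using filterlim_compose[OF key[OF leg assms(2)] ffst] unfolding N1_def .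
  have L2: "((\<lambda>x. N2 (snd x)) \<longlongrightarrow> complex_of_real ((hnorm (\<gamma>' t))\<^sup>2)) F"
    using filterlim_compose[OF key[OF leg assms(3)] fsnd] unfolding N2_def .
  have gt: "((\<lambda>x. \<gamma> (t + snd x)) \<longlongrightarrow> \<gamma> t) F"
  proof -
    have "((\<lambda>x. t + snd x) \<longlongrightarrow> t) F" using tendsto_add[OF tendsto_const tendsto_snd[OF id]] by simp
    then show ?thesis by (rule isCont_tendsto_compose[OF ct])
  qed
  have gs: "((\<lambda>x. \<gamma> (s + fst x)) \<longlongrightarrow> \<gamma> s) F"
  proof -
    have "((\<lambda>x. s + fst x) \<longlongrightarrow> s) F" using tendsto_add[OF tendsto_const tendsto_fst[OF id]] by simp
    then show ?thesis by (rule isCont_tendsto_compose[OF cs])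
  qed
  have LD: "(D \<longlongrightarrow> heisA (heis_mult (heis_inv (\<gamma> t)) (\<gamma> s)) * heisA (heis_mult (heis_inv (\<gamma> s)) (\<gamma> t))) F"
    unfolding D_def
    by (intro tendsto_mult isCont_tendsto_compose[OF contA] gt gs)
  define k where "k = koranyi (heis_mult (heis_inv (\<gamma> s)) (\<gamma> t))"
  have Dval: "heisA (heis_mult (heis_inv (\<gamma> t)) (\<gamma> s)) * heisA (heis_mult (heis_inv (\<gamma> s)) (\<gamma> t))
     = complex_of_real (k^4)" unfolding k_def by (rule Aprod)
  have knz: "k^4 \<noteq> 0" unfolding k_def using Anz[OF assms(5)] .
  have lim: "((\<lambda>x. N1 (fst x) * N2 (snd x) / D x) \<longlongrightarrow>
      complex_of_real ((hnorm (\<gamma>' s))\<^sup>2) * complex_of_real ((hnorm (\<gamma>' t))\<^sup>2) / complex_of_real (k^4)) F"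
    using tendsto_divide[OF tendsto_mult[OF L1 L2] LD[unfolded Dval]] knz by simp
  have val: "complex_of_real ((hnorm (\<gamma>' s))\<^sup>2) * complex_of_real ((hnorm (\<gamma>' t))\<^sup>2) / complex_of_real (k^4)
     = complex_of_real ((hnorm (\<gamma>' s) * hnorm (\<gamma>' t) / k\<^sup>2)\<^sup>2)"
    by (simp add: power_divide power_mult_distrib flip: power_mult)
  have fn: "(\<lambda>(ds, dt). cross_ratio (\<gamma> s) (\<gamma> t) (\<gamma> (s + ds)) (\<gamma> (t + dt)) / complex_of_real (ds\<^sup>2 * dt\<^sup>2))
      = (\<lambda>x. N1 (fst x) * N2 (snd x) / D x)"
  proof
    fix x :: "real \<times> real"
    obtain ds dt where x: "x = (ds, dt)" by (cases x)
    have "cross_ratio (\<gamma> s) (\<gamma> t) (\<gamma> (s + ds)) (\<gamma> (t + dt)) / complex_of_real (ds\<^sup>2 * dt\<^sup>2)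
        = N1 ds * N2 dt / D (ds, dt)"
    proof -
      let ?A = "heisA (heis_mult (heis_inv (\<gamma> (s+ds))) (\<gamma> s))"
      let ?B = "heisA (heis_mult (heis_inv (\<gamma> (t+dt))) (\<gamma> t))"
      let ?C = "heisA (heis_mult (heis_inv (\<gamma> (t+dt))) (\<gamma> s))"
      let ?E = "heisA (heis_mult (heis_inv (\<gamma> (s+ds))) (\<gamma> t))"
      have 1: "cross_ratio (\<gamma> s) (\<gamma> t) (\<gamma> (s + ds)) (\<gamma> (t + dt)) = (?A * ?B) / (?C * ?E)"
        unfolding cross_ratio_def ..
      have 2: "N1 ds * N2 dt / D (ds, dt) = (?A / complex_of_real (ds\<^sup>2)) * (?B / complex_of_real (dt\<^sup>2)) / (?C * ?E)"
        unfolding N1_def N2_def D_def by simp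
      show ?thesis unfolding 1 2 of_real_mult by (rule alg)
    qed
    then show "(\<lambda>(ds, dt). cross_ratio (\<gamma> s) (\<gamma> t) (\<gamma> (s + ds)) (\<gamma> (t + dt)) / complex_of_real (ds\<^sup>2 * dt\<^sup>2)) x
       = N1 (fst x) * N2 (snd x) / D x" unfolding x by simp
  qed
  show ?thesis using lim unfolding val fn unfolding k_def F_def S_def .
qed

end
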